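(* Let $A,Q,C_1,\dots,C_M,R_1,\dots,R_M$ be real scalars with $Q\ge0$ and $R_m>0$, and for $P\ge0$ define $f(P)=A^2P+Q$ and $g_m(P)=A^2P+Q-\frac{A^2C_m^2P^2}{C_m^2P+R_m}$, $m=1,\dots,M$. Let $\mathcal{F}$ be any function formed by composition (in any order) of any of the functions $f,g_1,\dots,g_M,\mathrm{id}$. Then: (i) $\mathcal{F}$ is either of the affine form $\mathcal{F}(P)=aP+b$ for some $a,b\ge0$, or of the linear fractional form $\mathcal{F}(P)=\frac{aP+b}{cP+d}$ for some $a,b,c,d\ge0$ with $ad-bc\ge0$; (ii) for each $m=1,\dots,M$, $P\mapsto\mathcal{F}(f(P))-\mathcal{F}(g_m(P))$ is an increasing function of $P\ge0$.
   Context: $\mathrm{id}$ denotes the identity function. Increasing means non-decreasing. *)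

theory Defs
  imports Complex_Main
begin

definition riccati_f :: "real \<Rightarrow> real \<Rightarrow> real \<Rightarrow> real" where
  "riccati_f A Q P = A^2 * P + Q"

definition riccati_g :: "real \<Rightarrow> real \<Rightarrow> real \<Rightarrow> real \<Rightarrow> real \<Rightarrow> real" where
  "riccati_g A Q Cm Rm P = A^2 * P + Q - (A^2 * Cm^2 * P^2) / (Cm^2 * P + Rm)"

inductive composed ::
  "real \<Rightarrow> real \<Rightarrow> (nat \<Rightarrow> real) \<Rightarrow> (nat \<Rightarrow> real) \<Rightarrow> nat \<Rightarrow> (real \<Rightarrow> real) \<Rightarrow> bool"
  for A Q C R M where
  comp_id: "composed A Q C R M id"
| comp_f: "composed A Q C R M F \<Longrightarrow> composed A Q C R M (riccati_f A Q \<circ> F)"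
| comp_g: "composed A Q C R M F \<Longrightarrow> m \<in> {1..M} \<Longrightarrow>
             composed A Q C R M (riccati_g A Q (C m) (R m) \<circ> F)"

end

theory Submission
  imports Defs
begin

lemma g_form:
  assumes "R > 0" "y \<ge> 0"
  shows "riccati_g A Q Cm R y = ((A^2*R + Q*Cm^2)*y + Q*R)/(Cm^2*y + R)"
proof -
  have "Cm^2*y + R > 0" using assms by (simp add: add_nonneg_pos)
  thus ?thesis unfolding riccati_g_def by (simp add: field_simps power2_eq_square)
qed

lemma g_alt:
  assumes "R > 0" "y \<ge> 0"
  shows "riccati_g A Q Cm R y = A^2*R*y/(Cm^2*y + R) + Q"
proof -
  have "Cm^2*y + R > 0" using assms by (simp add: add_nonneg_pos)
  thus ?thesis unfolding riccati_g_def by (simp add: field_simps power2_eq_square)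
qed

lemma frac_comp:
  fixes N D k q s r :: real
  assumes "D > 0" "s*N + r*D \<noteq> 0"
  shows "(k*(N/D)+q)/(s*(N/D)+r) = (k*N+q*D)/(s*N+r*D)"
proof -
  have "k*(N/D)+q = (k*N+q*D)/D" "s*(N/D)+r = (s*N+r*D)/D" using assms by (simp_all add: field_simps)
  thus ?thesis using assms by simp
qed

lemma composed_mob:
  assumes "composed A Q C R M F" "Q \<ge> 0" "\<And>m. m \<in> {1..M} \<Longrightarrow> R m > 0"
  shows "\<exists>a b c d. a\<ge>0 \<and> b\<ge>0 \<and> c\<ge>0 \<and> d>0 \<and> a*d-b*c\<ge>0 \<and>
           (\<forall>P\<ge>0. F P = (a*P+b)/(c*P+d))"
  using assms(1)
proof (induction rule: composed.induct)
  case comp_id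
  show ?case by (rule exI[of _ 1], rule exI[of _ 0], rule exI[of _ 0], rule exI[of _ 1]) simp
next
  case (comp_f F)
  then obtain a b c d where h: "a\<ge>0" "b\<ge>0" "c\<ge>0" "d>0" "a*d-b*c\<ge>0"
    "\<forall>P\<ge>0. F P = (a*P+b)/(c*P+d)" by blast
  show ?case
  proof (intro exI conjI allI impI)
    show "0 \<le> A^2*a+Q*c" "0 \<le> A^2*b+Q*d" using h assms(2) by auto
    show "0 \<le> c" "0 < d" using h by auto
    have "(A^2*a+Q*c)*d - (A^2*b+Q*d)*c = A^2*(a*d-b*c)" by (simp add: algebra_simps)
    thus "0 \<le> (A^2*a+Q*c)*d - (A^2*b+Q*d)*c" using h by simp
    fix P :: real assume P: "0 \<le> P"
    have pos: "c*P+d > 0" using h P by (simp add: add_nonneg_pos)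
    show "(riccati_f A Q \<circ> F) P = ((A^2*a+Q*c)*P + (A^2*b+Q*d))/(c*P+d)"
      using h(6) P pos unfolding riccati_f_def by (simp add: field_simps)
  qed
next
  case (comp_g F m)
  then obtain a b c d where h: "a\<ge>0" "b\<ge>0" "c\<ge>0" "d>0" "a*d-b*c\<ge>0"
    "\<forall>P\<ge>0. F P = (a*P+b)/(c*P+d)" by blast
  define Rm where "Rm = R m"
  define Cm where "Cm = C m"
  have Rm: "Rm > 0" using comp_g assms(3) Rm_def by auto
  define k where "k = A^2*Rm + Q*Cm^2"
  have k: "k \<ge> 0" using Rm assms(2) unfolding k_def by simp
  show ?case
  proof (intro exI conjI allI impI)
    show "0 \<le> k*a + Q*Rm*c" "0 \<le> k*b+Q*Rm*d" "0 \<le> Cm^2*a + Rm*c"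
      using h k Rm assms(2) by auto
    show "0 < Cm^2*b + Rm*d" using h Rm by (simp add: add_nonneg_pos)
    have "(k*a + Q*Rm*c)*(Cm^2*b + Rm*d) - (k*b+Q*Rm*d)*(Cm^2*a + Rm*c)
          = A^2*Rm^2*(a*d-b*c)" unfolding k_def by (simp add: algebra_simps power2_eq_square)
    thus "0 \<le> (k*a + Q*Rm*c)*(Cm^2*b + Rm*d) - (k*b+Q*Rm*d)*(Cm^2*a + Rm*c)"
      using h by simp
    fix P :: real assume P: "0 \<le> P"
    have pos: "c*P+d > 0" using h P by (simp add: add_nonneg_pos)
    have y: "F P \<ge> 0" using h P pos by simp
    have q1: "0 < Cm^2*b + Rm*d" using h Rm by (simp add: add_nonneg_pos)
    have q2: "0 \<le> (Cm^2*a + Rm*c)*P" using h Rm P by simp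
    have pos2: "Cm^2*b + Rm*d + (Cm^2*a + Rm*c)*P > 0" using q1 q2 by linarith
    have "(riccati_g A Q (C m) (R m) \<circ> F) P = (k*F P + Q*Rm)/(Cm^2*F P + Rm)"
      using g_form[OF Rm y] unfolding Rm_def Cm_def k_def by simp
    also have "\<dots> = ((k*a + Q*Rm*c)*P + (k*b+Q*Rm*d))/((Cm^2*a + Rm*c)*P + (Cm^2*b + Rm*d))"
      using h(6) P pos pos2 frac_comp[of "c*P+d" "Cm^2" "a*P+b" Rm k "Q*Rm"]
      by (simp add: algebra_simps)
    finally show "(riccati_g A Q (C m) (R m) \<circ> F) P = ((k*a + Q*Rm*c)*P + (k*b+Q*Rm*d))/((Cm^2*a + Rm*c)*P + (Cm^2*b + Rm*d))" .
  qed
qed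

lemma fr_le:
  fixes x y D1 D2 :: real
  assumes "D1 > 0" "D2 > 0" "x*D2 \<le> y*D1"
  shows "x/D1 \<le> y/D2"
  using assms by (simp add: divide_simps)

lemma h_mono:
  fixes al be ga de :: real
  assumes "al \<ge> 0" "be > 0" "ga \<ge> 0" "de > 0" "0 \<le> P" "P \<le> P'"
  shows "P^2/((al*P+be)*(ga*P+de)) \<le> P'^2/((al*P'+be)*(ga*P'+de))"
proof -
  have p1: "al*P+be > 0" "ga*P+de > 0" "al*P'+be > 0" "ga*P'+de > 0" using assms
    by (auto intro: add_nonneg_pos)
  have i1: "P*(al*P'+be) \<le> P'*(al*P+be)" using assms by (simp add: algebra_simps mult_left_mono)
  have i2: "P*(ga*P'+de) \<le> P'*(ga*P+de)" using assms by (simp add: algebra_simps mult_left_mono)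
  have "(P*(al*P'+be))*(P*(ga*P'+de)) \<le> (P'*(al*P+be))*(P'*(ga*P+de))"
    by (rule mult_mono[OF i1 i2]) (use assms p1 in auto)
  hence "P^2*((al*P'+be)*(ga*P'+de)) \<le> P'^2*((al*P+be)*(ga*P+de))"
    by (simp add: algebra_simps power2_eq_square)
  thus ?thesis by (intro fr_le) (use p1 in auto)
qed

lemma mob_diff:
  fixes a b c d x y :: real
  assumes "c*x+d > 0" "c*y+d > 0"
  shows "(a*x+b)/(c*x+d) - (a*y+b)/(c*y+d) = (a*d-b*c)*(x-y)/((c*x+d)*(c*y+d))"
proof -
  have "(a*x+b)/(c*x+d) - (a*y+b)/(c*y+d) = ((a*x+b)*(c*y+d) - (a*y+b)*(c*x+d))/((c*x+d)*(c*y+d))"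
    using assms by (intro diff_frac_eq) auto
  also have "(a*x+b)*(c*y+d) - (a*y+b)*(c*x+d) = (a*d-b*c)*(x-y)" by (simp add: algebra_simps)
  finally show ?thesis .
qed

lemma cancel_u:
  fixes K X u Z W :: real
  assumes "u \<noteq> 0"
  shows "K*(X/u)/(Z*(W/u)) = K*(X/(Z*W))"
  using assms by (simp add: divide_simps)

lemma diff_mono:
  assumes "a\<ge>0" "b\<ge>0" "c\<ge>0" "d>0" "a*d-b*c\<ge>0"
    and F: "\<forall>P\<ge>0. F P = (a*P+b)/(c*P+d)" and R: "R > 0" and Q: "Q \<ge> 0"
  shows "mono_on {0..} (\<lambda>P. F (riccati_f A Q P) - F (riccati_g A Q Cm R P))"
proof -
  define s where "s = Cm^2"
  define al where "al = c*A^2"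
  define be where "be = c*Q+d"
  define ga where "ga = al*R+be*s"
  define de where "de = be*R"
  have s: "s \<ge> 0" unfolding s_def by simp
  have al: "al \<ge> 0" unfolding al_def using assms by simp
  have be: "be > 0" unfolding be_def using assms by (simp add: add_nonneg_pos)
  have ga: "ga \<ge> 0" unfolding ga_def using al be s R by simp
  have de: "de > 0" unfolding de_def using be R by simp
  have key: "F (riccati_f A Q P) - F (riccati_g A Q Cm R P)
      = ((a*d-b*c)*A^2*s) * (P^2/((al*P+be)*(ga*P+de)))" if P: "P \<ge> 0" for P
  proof -
    define x where "x = A^2*P+Q"
    define y where "y = A^2*R*P/(s*P+R)+Q"
    have sp: "s*P+R > 0" using s P R by (simp add: add_nonneg_pos)
    have x0: "x \<ge> 0" unfolding x_def using Q P by simp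
    have y0: "y \<ge> 0" unfolding y_def using Q sp R P by simp
    have cx: "c*x+d > 0" using x0 assms by (simp add: add_nonneg_pos)
    have cy: "c*y+d > 0" using y0 assms by (simp add: add_nonneg_pos)
    have fx: "riccati_f A Q P = x" unfolding x_def riccati_f_def by simp
    have gy: "riccati_g A Q Cm R P = y" unfolding y_def s_def using g_alt[OF R P] by simp
    have e1: "F x - F y = (a*d-b*c)*(x-y)/((c*x+d)*(c*y+d))"
      using F x0 y0 mob_diff[OF cx cy, of a b] by simp
    have e2: "c*x+d = al*P+be" unfolding x_def al_def be_def by (simp add: algebra_simps)
    have e3: "c*y+d = (ga*P+de)/(s*P+R)" unfolding y_def ga_def de_def al_def be_def
      using sp by (simp add: field_simps)
    have e4: "x-y = A^2*s*P^2/(s*P+R)" unfolding x_def y_def using sp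
      by (simp add: field_simps power2_eq_square)
    have gd: "ga*P+de > 0" using ga de P by (simp add: add_nonneg_pos)
    have ab: "al*P+be > 0" using al be P by (simp add: add_nonneg_pos)
    have "(a*d-b*c)*(x-y)/((c*x+d)*(c*y+d)) = (a*d-b*c)*(A^2*s*P^2/(s*P+R))/((al*P+be)*((ga*P+de)/(s*P+R)))"
      unfolding e2 e3 e4 ..
    also have "\<dots> = (a*d-b*c)*(A^2*s*P^2/((al*P+be)*(ga*P+de)))"
      by (rule cancel_u) (use sp in simp)
    also have "\<dots> = ((a*d-b*c)*A^2*s) * (P^2/((al*P+be)*(ga*P+de)))" by simp
    finally show ?thesis unfolding fx gy e1 .
  qed
  have K: "(a*d-b*c)*A^2*s \<ge> 0" using assms s by simp
  show ?thesis
  proof (rule mono_onI)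
    fix P P' :: real assume "P \<in> {0..}" "P' \<in> {0..}" "P \<le> P'"
    hence P: "0 \<le> P" "P \<le> P'" "0 \<le> P'" by auto
    show "F (riccati_f A Q P) - F (riccati_g A Q Cm R P) \<le> F (riccati_f A Q P') - F (riccati_g A Q Cm R P')"
      unfolding key[OF P(1)] key[OF P(3)]
      by (rule mult_left_mono[OF h_mono[OF al be ga de P(1,2)] K])
  qed
qed

theorem lemma5:
  fixes A Q :: real and C R :: "nat \<Rightarrow> real" and M :: nat and F :: "real \<Rightarrow> real"
  assumes "Q \<ge> 0"
    and "\<And>m. m \<in> {1..M} \<Longrightarrow> R m > 0"
    and "composed A Q C R M F"
  shows "((\<exists>a b. a \<ge> 0 \<and> b \<ge> 0 \<and> (\<forall>P\<ge>0. F P = a * P + b))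
          \<or> (\<exists>a b c d. a \<ge> 0 \<and> b \<ge> 0 \<and> c \<ge> 0 \<and> d \<ge> 0 \<and> a * d - b * c \<ge> 0 \<and>
               (\<forall>P\<ge>0. c * P + d > 0 \<and> F P = (a * P + b) / (c * P + d))))
        \<and> (\<forall>m \<in> {1..M}. mono_on {0..}
              (\<lambda>P. F (riccati_f A Q P) - F (riccati_g A Q (C m) (R m) P)))"
proof -
  obtain a b c d where h: "a\<ge>0" "b\<ge>0" "c\<ge>0" "d>0" "a*d-b*c\<ge>0"
    "\<forall>P\<ge>0. F P = (a*P+b)/(c*P+d)" using composed_mob[OF assms(3,1,2)] by blast
  have "\<forall>P\<ge>0. c * P + d > 0 \<and> F P = (a * P + b) / (c * P + d)"
  proof (intro allI impI conjI)
    fix P :: real assume "0 \<le> P"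
    thus "c*P+d > 0" using h(3,4) by (simp add: add_nonneg_pos)
    show "F P = (a * P + b) / (c * P + d)" using h(6) \<open>0 \<le> P\<close> by simp
  qed
  moreover have "\<forall>m \<in> {1..M}. mono_on {0..}
              (\<lambda>P. F (riccati_f A Q P) - F (riccati_g A Q (C m) (R m) P))"
    using diff_mono[OF h _ assms(1)] assms(2) by blast
  ultimately show ?thesis using h(1-5) by (intro conjI disjI2 exI[of _ a] exI[of _ b] exI[of _ c] exI[of _ d]) auto
qed

end
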